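(* Let $d\ge1$, $A=d$, and consider the MDP and model class described in the context. Let $\theta\in[-1,1]^d$ be arbitrary (e.g., the parameter output by any, possibly stochastic, algorithm that outputs a model $T_\theta$ in the class), and let $\pi_\theta$ be the greedy policy with respect to $T_\theta$, with ties broken uniformly at random. Then $$\max_{\pi}\eta(T^\star,\pi)-\eta(T^\star,\pi_\theta)\ge\frac{(A-1)\gamma^2}{A(1-\gamma)}.$$
   Context: MDP: states $\mathcal{S}=\{s_0,s_1,\dots,s_d\}\cup\{s_g,s_b\}$, actions $a_1,\dots,a_d$ ($A=d$ actions), discount $\gamma\in[0,1)$, fixed initial state $s_0$. True deterministic dynamics $T^\star$: $T^\star(s_0,a_i)=s_i$; $T^\star(s_i,a_j)=s_g$ if $i=j$ and $s_b$ if $i\ne j$ ($i,j\in[d]$); $T^\star(s_g,a_i)=s_g$, $T^\star(s_b,a_i)=s_b$. Reward $r(s,a_i)=\mathbf{1}\{s=s_g\}$. For a policy $\pi$ and dynamics $T$, $\eta(T,\pi)=\mathbb{E}[\sum_{t\ge0}\gamma^t r(s_t,a_t)\mid s_0,\ a_t\sim\pi(s_t),\ s_{t+1}\sim T(s_t,a_t)]$. Model class $\{T_\theta:\theta\in[-1,1]^d\}$: for $i,j\in[d]$, $T_\theta(s_i,a_j)=s_g$ with probability $\frac12(1+e_j^\top\theta)$ and $s_b$ with probability $\frac12(1-e_j^\top\theta)$, where $e_j$ is the $j$-th standard basis vector; on $s_0,s_g,s_b$, $T_\theta$ coincides with $T^\star$. The greedy policy $\pi_\theta$ w.r.t. $T_\theta$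 is the optimal policy of the MDP with dynamics $T_\theta$ and reward $r$, where at each state it selects uniformly at random among the actions maximizing the optimal $Q$-function of $T_\theta$. The maximum over $\pi$ ranges over all policies. *)

theory Defs
  imports Complex_Main
begin

datatype st = S0 | Si nat | SG | SB

definition states :: "nat \<Rightarrow> st set" where
  "states d = {S0, SG, SB} \<union> Si ` {1..d}"

definition actions :: "nat \<Rightarrow> nat set" where
  "actions d = {1..d}"

text \<open>Transition kernels: T s a s' = probability of moving to s' from s under action a.\<close>
type_synonym kernel = "st \<Rightarrow> nat \<Rightarrow> st \<Rightarrow> real"

fun nxt :: "st \<Rightarrow> nat \<Rightarrow> st" where
  "nxt S0 a = Si a"
| "nxt (Si i) a = (if i = a then SG else SB)"
| "nxt SG a = SG"
| "nxt SB a = SB"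

definition Tstar :: kernel where
  "Tstar s a s' = (if s' = nxt s a then 1 else 0)"

definition Ttheta :: "(nat \<Rightarrow> real) \<Rightarrow> kernel" where
  "Ttheta \<theta> s a s' = (case s of
      Si i \<Rightarrow> (if s' = SG then (1 + \<theta> a) / 2 else if s' = SB then (1 - \<theta> a) / 2 else 0)
    | _ \<Rightarrow> Tstar s a s')"

definition rew :: "st \<Rightarrow> nat \<Rightarrow> real" where
  "rew s a = (if s = SG then 1 else 0)"

text \<open>(Stationary, randomized, Markov) policies: pi s a = probability of action a at state s.\<close>
definition policies :: "nat \<Rightarrow> (st \<Rightarrow> nat \<Rightarrow> real) set" where
  "policies d = {\<pi>. \<forall>s \<in> states d. (\<forall>a \<in> actions d. 0 \<le> \<pi> s a) \<and> (\<Sum>a\<in>actions d. \<pi> s a) = 1}"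

definition step :: "nat \<Rightarrow> kernel \<Rightarrow> (st \<Rightarrow> nat \<Rightarrow> real) \<Rightarrow> (st \<Rightarrow> real) \<Rightarrow> (st \<Rightarrow> real)" where
  "step d T \<pi> \<mu> s' = (\<Sum>s\<in>states d. \<Sum>a\<in>actions d. \<mu> s * \<pi> s a * T s a s')"

definition distr :: "nat \<Rightarrow> kernel \<Rightarrow> (st \<Rightarrow> nat \<Rightarrow> real) \<Rightarrow> (st \<Rightarrow> real) \<Rightarrow> nat \<Rightarrow> (st \<Rightarrow> real)" where
  "distr d T \<pi> \<mu> t = (step d T \<pi> ^^ t) \<mu>"

definition eta_from :: "nat \<Rightarrow> real \<Rightarrow> kernel \<Rightarrow> (st \<Rightarrow> nat \<Rightarrow> real) \<Rightarrow> (st \<Rightarrow> real) \<Rightarrow> real" where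
  "eta_from d \<gamma> T \<pi> \<mu> =
     (\<Sum>t. \<gamma> ^ t * (\<Sum>s\<in>states d. \<Sum>a\<in>actions d. distr d T \<pi> \<mu> t s * \<pi> s a * rew s a))"

definition eta :: "nat \<Rightarrow> real \<Rightarrow> kernel \<Rightarrow> (st \<Rightarrow> nat \<Rightarrow> real) \<Rightarrow> real" where
  "eta d \<gamma> T \<pi> = eta_from d \<gamma> T \<pi> (\<lambda>s. if s = S0 then 1 else 0)"

definition Q_pi :: "nat \<Rightarrow> real \<Rightarrow> kernel \<Rightarrow> (st \<Rightarrow> nat \<Rightarrow> real) \<Rightarrow> st \<Rightarrow> nat \<Rightarrow> real" where
  "Q_pi d \<gamma> T \<pi> s a = rew s a + \<gamma> * eta_from d \<gamma> T \<pi> (\<lambda>s'. T s a s')"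

definition Q_star :: "nat \<Rightarrow> real \<Rightarrow> kernel \<Rightarrow> st \<Rightarrow> nat \<Rightarrow> real" where
  "Q_star d \<gamma> T s a = (SUP \<pi>\<in>policies d. Q_pi d \<gamma> T \<pi> s a)"

definition greedy_set :: "nat \<Rightarrow> real \<Rightarrow> kernel \<Rightarrow> st \<Rightarrow> nat set" where
  "greedy_set d \<gamma> T s = {a \<in> actions d. \<forall>b \<in> actions d. Q_star d \<gamma> T s b \<le> Q_star d \<gamma> T s a}"

definition greedy :: "nat \<Rightarrow> real \<Rightarrow> kernel \<Rightarrow> st \<Rightarrow> nat \<Rightarrow> real" where
  "greedy d \<gamma> T s a = (if a \<in> greedy_set d \<gamma> T s then 1 / real (card (greedy_set d \<gamma> T s)) else 0)"

end

theory Submission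
  imports Defs
begin

lemma states_sum:
  "(\<Sum>s\<in>states d. F s) = F S0 + F SG + F SB + (\<Sum>i=1..d. F (Si i))"
proof -
  have e: "states d = insert S0 (insert SG (insert SB (Si ` {1..d})))" by (auto simp: states_def)
  have r: "(\<Sum>s\<in>Si ` {1..d}. F s) = (\<Sum>i=1..d. F (Si i))" by (simp add: sum.reindex inj_on_def)
  show ?thesis unfolding e using r by (auto simp: image_iff add.assoc)
qed

lemma step_expand:
  assumes "\<And>c. T SB c s' = 0"
  shows "step d T \<pi> \<mu> s' = (\<Sum>c\<in>actions d. \<mu> S0 * \<pi> S0 c * T S0 c s')
     + (\<Sum>c\<in>actions d. \<mu> SG * \<pi> SG c * T SG c s')
     + (\<Sum>i=1..d. \<Sum>c\<in>actions d. \<mu> (Si i) * \<pi> (Si i) c * T (Si i) c s')"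
  unfolding step_def states_sum using assms by simp

lemma reward_sum:
  "(\<Sum>s\<in>states d. \<Sum>a\<in>actions d. \<mu> s * \<pi> s a * rew s a) = \<mu> SG * (\<Sum>a\<in>actions d. \<pi> SG a)"
  unfolding states_sum by (simp add: rew_def sum_distrib_left)

lemma distrA:
  assumes a: "a \<in> actions d" and hSG: "(\<Sum>c\<in>actions d. \<pi> SG c) = 1" and "s \<noteq> SB"
  shows "distr d (Ttheta \<theta>) \<pi> (\<lambda>s'. Ttheta \<theta> S0 a s') t s =
    (if t = 0 then (if s = Si a then 1 else 0) else if s = SG then (\<Sum>c\<in>actions d. \<pi> (Si a) c * ((1 + \<theta> c)/2)) else 0)"
  using assms(3)
proof (induction t arbitrary: s)
  case 0 then show ?case by (simp add: distr_def Ttheta_def Tstar_def)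
next
  case (Suc t)
  define \<mu> where "\<mu> = distr d (Ttheta \<theta>) \<pi> (\<lambda>s'. Ttheta \<theta> S0 a s') t"
  have IH: "\<And>s. s \<noteq> SB \<Longrightarrow> \<mu> s = (if t = 0 then (if s = Si a then 1 else 0) else if s = SG then (\<Sum>c\<in>actions d. \<pi> (Si a) c * ((1 + \<theta> c)/2)) else 0)"
    using Suc.IH unfolding \<mu>_def by blast
  have "distr d (Ttheta \<theta>) \<pi> (\<lambda>s'. Ttheta \<theta> S0 a s') (Suc t) s = step d (Ttheta \<theta>) \<pi> \<mu> s"
    by (simp add: distr_def \<mu>_def)
  also have "\<dots> = (\<Sum>c\<in>actions d. \<mu> S0 * \<pi> S0 c * Ttheta \<theta> S0 c s)
     + (\<Sum>c\<in>actions d. \<mu> SG * \<pi> SG c * Ttheta \<theta> SG c s)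
     + (\<Sum>i=1..d. \<Sum>c\<in>actions d. \<mu> (Si i) * \<pi> (Si i) c * Ttheta \<theta> (Si i) c s)"
    by (rule step_expand) (use Suc.prems in \<open>simp add: Ttheta_def Tstar_def\<close>)
  finally have E: "distr d (Ttheta \<theta>) \<pi> (\<lambda>s'. Ttheta \<theta> S0 a s') (Suc t) s = \<dots>" .
  show ?case
  proof (cases "t = 0")
    case True
    have "(\<Sum>i=1..d. \<Sum>c\<in>actions d. \<mu> (Si i) * \<pi> (Si i) c * Ttheta \<theta> (Si i) c s)
      = (\<Sum>i=1..d. if i = a then (\<Sum>c\<in>actions d. \<pi> (Si a) c * Ttheta \<theta> (Si a) c s) else 0)"
      by (rule sum.cong) (auto simp: IH True)
    also have "\<dots> = (\<Sum>c\<in>actions d. \<pi> (Si a) c * Ttheta \<theta> (Si a) c s)"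
      using a by (simp add: actions_def)
    also have "\<dots> = (if s = SG then (\<Sum>c\<in>actions d. \<pi> (Si a) c * ((1 + \<theta> c)/2)) else 0)"
      using Suc.prems by (auto simp: Ttheta_def)
    finally show ?thesis using E by (simp add: IH True)
  next
    case False
    have "(\<Sum>i=1..d. \<Sum>c\<in>actions d. \<mu> (Si i) * \<pi> (Si i) c * Ttheta \<theta> (Si i) c s) = 0"
      by (rule sum.neutral) (auto simp: IH False)
    moreover have "(\<Sum>c\<in>actions d. \<mu> SG * \<pi> SG c * Ttheta \<theta> SG c s) = (if s = SG then \<mu> SG else 0)"
      using hSG by (auto simp: Ttheta_def Tstar_def sum_distrib_left[symmetric])
    ultimately show ?thesis using E by (simp add: IH False)
  qed
qed


lemma distrB:
  assumes hSG: "(\<Sum>c\<in>actions d. \<pi> SG c) = 1" and "s \<noteq> SB"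
  shows "distr d Tstar \<pi> (\<lambda>s'. if s' = S0 then 1 else 0) t s =
    (if t = 0 then (if s = S0 then 1 else 0)
     else if t = 1 then (case s of Si i \<Rightarrow> if i \<in> actions d then \<pi> S0 i else 0 | _ \<Rightarrow> 0)
     else if s = SG then (\<Sum>c\<in>actions d. \<pi> S0 c * \<pi> (Si c) c) else 0)"
  using assms(2)
proof (induction t arbitrary: s)
  case 0 then show ?case by (simp add: distr_def)
next
  case (Suc t)
  define \<mu> where "\<mu> = distr d Tstar \<pi> (\<lambda>s'. if s' = S0 then 1 else 0) t"
  have IH: "\<And>s. s \<noteq> SB \<Longrightarrow> \<mu> s = (if t = 0 then (if s = S0 then 1 else 0)
     else if t = 1 then (case s of Si i \<Rightarrow> if i \<in> actions d then \<pi> S0 i else 0 | _ \<Rightarrow> 0)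
     else if s = SG then (\<Sum>c\<in>actions d. \<pi> S0 c * \<pi> (Si c) c) else 0)"
    using Suc.IH unfolding \<mu>_def by blast
  have "distr d Tstar \<pi> (\<lambda>s'. if s' = S0 then 1 else 0) (Suc t) s = step d Tstar \<pi> \<mu> s"
    by (simp add: distr_def \<mu>_def)
  also have "\<dots> = (\<Sum>c\<in>actions d. \<mu> S0 * \<pi> S0 c * Tstar S0 c s)
     + (\<Sum>c\<in>actions d. \<mu> SG * \<pi> SG c * Tstar SG c s)
     + (\<Sum>i=1..d. \<Sum>c\<in>actions d. \<mu> (Si i) * \<pi> (Si i) c * Tstar (Si i) c s)"
    by (rule step_expand) (use Suc.prems in \<open>simp add: Tstar_def\<close>)
  finally have E: "distr d Tstar \<pi> (\<lambda>s'. if s' = S0 then 1 else 0) (Suc t) s = \<dots>" .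
  consider "t = 0" | "t = 1" | "t \<ge> 2" by linarith
  then show ?case
  proof cases
    case 1
    have z: "(\<Sum>i=1..d. \<Sum>c\<in>actions d. \<mu> (Si i) * \<pi> (Si i) c * Tstar (Si i) c s) = 0"
      by (rule sum.neutral) (auto simp: IH 1)
    have "(\<Sum>c\<in>actions d. \<mu> S0 * \<pi> S0 c * Tstar S0 c s) = (\<Sum>c\<in>actions d. \<pi> S0 c * (if s = Si c then 1 else 0))"
      by (simp add: IH 1 Tstar_def)
    also have "\<dots> = (case s of Si i \<Rightarrow> if i \<in> actions d then \<pi> S0 i else 0 | _ \<Rightarrow> 0)"
    proof (cases s)
      case (Si i)
      have "(\<Sum>c\<in>actions d. \<pi> S0 c * (if s = Si c then 1 else 0)) = (\<Sum>c\<in>actions d. if c = i then \<pi> S0 c else 0)"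
        by (rule sum.cong) (auto simp: Si)
      then show ?thesis by (simp add: Si actions_def)
    qed auto
    finally show ?thesis using E z by (simp add: IH 1)
  next
    case 2
    have "(\<Sum>i=1..d. \<Sum>c\<in>actions d. \<mu> (Si i) * \<pi> (Si i) c * Tstar (Si i) c s)
       = (\<Sum>i=1..d. \<pi> S0 i * (if s = SG then \<pi> (Si i) i else 0))"
    proof (rule sum.cong)
      fix i assume i: "i \<in> {1..d}"
      have "(\<Sum>c\<in>actions d. \<mu> (Si i) * \<pi> (Si i) c * Tstar (Si i) c s)
         = (\<Sum>c\<in>actions d. if c = i then \<pi> S0 i * (if s = SG then \<pi> (Si i) i else 0) else 0)"
        by (rule sum.cong) (use i Suc.prems in \<open>auto simp: IH 2 Tstar_def actions_def\<close>)
      also have "\<dots> = \<pi> S0 i * (if s = SG then \<pi> (Si i) i else 0)"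
        using i by (simp add: actions_def)
      finally show "(\<Sum>c\<in>actions d. \<mu> (Si i) * \<pi> (Si i) c * Tstar (Si i) c s) = \<pi> S0 i * (if s = SG then \<pi> (Si i) i else 0)" .
    qed simp
    also have "\<dots> = (if s = SG then (\<Sum>c\<in>actions d. \<pi> S0 c * \<pi> (Si c) c) else 0)"
      by (cases "s = SG") (simp_all add: actions_def)
    finally have z: "(\<Sum>i=1..d. \<Sum>c\<in>actions d. \<mu> (Si i) * \<pi> (Si i) c * Tstar (Si i) c s) = (if s = SG then (\<Sum>c\<in>actions d. \<pi> S0 c * \<pi> (Si c) c) else 0)" .
    have "\<mu> S0 = 0" "\<mu> SG = 0" using 2 by (simp_all add: IH)
    then show ?thesis using E z 2 by simp
  next
    case 3
    have "(\<Sum>i=1..d. \<Sum>c\<in>actions d. \<mu> (Si i) * \<pi> (Si i) c * Tstar (Si i) c s) = 0"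
      by (rule sum.neutral) (use 3 in \<open>auto simp: IH\<close>)
    moreover have "(\<Sum>c\<in>actions d. \<mu> SG * \<pi> SG c * Tstar SG c s) = (if s = SG then \<mu> SG else 0)"
      using hSG by (auto simp: Tstar_def sum_distrib_left[symmetric])
    moreover have "\<mu> S0 = 0" using 3 by (simp add: IH)
    ultimately show ?thesis using E 3 by (simp add: IH)
  qed
qed

lemma eta_formula:
  assumes hSG: "(\<Sum>c\<in>actions d. \<pi> SG c) = 1" and g: "0 \<le> \<gamma>" "\<gamma> < 1"
  shows "eta d \<gamma> Tstar \<pi> = (\<Sum>c\<in>actions d. \<pi> S0 c * \<pi> (Si c) c) * \<gamma>^2 / (1 - \<gamma>)"
proof -
  define p where "p = (\<Sum>c\<in>actions d. \<pi> S0 c * \<pi> (Si c) c)"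
  define f where "f = (\<lambda>t::nat. \<gamma> ^ t * (if t < 2 then 0 else p))"
  have R: "(\<Sum>s\<in>states d. \<Sum>a\<in>actions d. distr d Tstar \<pi> (\<lambda>s. if s = S0 then 1 else 0) t s * \<pi> s a * rew s a) = (if t < 2 then 0 else p)" for t
    unfolding reward_sum using distrB[where s=SG and t=t and d=d and \<pi>=\<pi>, OF hSG] hSG by (simp add: p_def)
  have "(\<lambda>i. f (i + 2)) sums (p * \<gamma>^2 * (1 / (1 - \<gamma>)))"
  proof -
    have "(\<lambda>i. p * \<gamma>^2 * \<gamma> ^ i) sums (p * \<gamma>^2 * (1 / (1 - \<gamma>)))"
      by (rule sums_mult) (rule geometric_sums, use g in simp)
    moreover have "(\<lambda>i. f (i + 2)) = (\<lambda>i. p * \<gamma>^2 * \<gamma> ^ i)"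
      by (auto simp: f_def power_add power2_eq_square mult_ac)
    ultimately show ?thesis by simp
  qed
  moreover have s0: "(\<Sum>i<2. f i) = 0" by (simp add: f_def)
  ultimately have "f sums (p * \<gamma>^2 * (1 / (1 - \<gamma>)))"
    using sums_iff_shift[of f 2 "p * \<gamma>^2 * (1 / (1 - \<gamma>))"] by simp
  then have "suminf f = p * \<gamma>^2 / (1 - \<gamma>)" by (simp add: sums_iff)
  then show ?thesis unfolding eta_def eta_from_def R p_def[symmetric] f_def by simp
qed


lemma pol_SG: "\<pi> \<in> policies d \<Longrightarrow> (\<Sum>c\<in>actions d. \<pi> SG c) = 1"
  by (simp add: policies_def states_def)

lemma pol_le1:
  assumes "\<pi> \<in> policies d" "c \<in> actions d"
  shows "(\<Sum>a\<in>actions d. \<pi> S0 a * \<pi> (Si a) a) \<le> 1"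
proof -
  have P: "\<And>s. s \<in> states d \<Longrightarrow> (\<forall>a \<in> actions d. 0 \<le> \<pi> s a) \<and> (\<Sum>a\<in>actions d. \<pi> s a) = 1"
    using assms(1) by (simp add: policies_def)
  have S: "\<And>a. a \<in> actions d \<Longrightarrow> Si a \<in> states d" by (simp add: states_def actions_def)
  have "(\<Sum>a\<in>actions d. \<pi> S0 a * \<pi> (Si a) a) \<le> (\<Sum>a\<in>actions d. \<pi> S0 a * 1)"
  proof (rule sum_mono)
    fix a assume a: "a \<in> actions d"
    have "\<pi> (Si a) a \<le> (\<Sum>b\<in>actions d. \<pi> (Si a) b)"
      by (rule member_le_sum) (use P[OF S[OF a]] a in \<open>auto simp: actions_def\<close>)
    then have "\<pi> (Si a) a \<le> 1" using P[OF S[OF a]] by simp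
    moreover have "0 \<le> \<pi> S0 a" using P[of S0] a by (simp add: states_def)
    ultimately show "\<pi> S0 a * \<pi> (Si a) a \<le> \<pi> S0 a * 1" by (rule mult_left_mono)
  qed
  also have "\<dots> = 1" using P[of S0] by (simp add: states_def)
  finally show ?thesis .
qed

lemma QS0:
  assumes "\<pi> \<in> policies d" "a \<in> actions d"
  shows "Q_pi d \<gamma> (Ttheta \<theta>) \<pi> S0 a = \<gamma> * (\<Sum>t. \<gamma>^t * (if t = 0 then 0 else (\<Sum>c\<in>actions d. \<pi> (Si a) c * ((1 + \<theta> c)/2))))"
  unfolding Q_pi_def eta_from_def reward_sum
  using distrA[where s=SG and d=d and \<pi>=\<pi> and a=a and \<theta>=\<theta>, OF assms(2) pol_SG[OF assms(1)]] pol_SG[OF assms(1)]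
  by (simp add: rew_def)

lemma swap_ex:
  assumes "\<pi> \<in> policies d" "a \<in> actions d" "b \<in> actions d"
  shows "\<exists>\<pi>'\<in>policies d. Q_pi d \<gamma> (Ttheta \<theta>) \<pi> S0 a = Q_pi d \<gamma> (Ttheta \<theta>) \<pi>' S0 b"
proof -
  define \<pi>' where "\<pi>' = (\<lambda>s. if s = Si b then \<pi> (Si a) else if s = Si a then \<pi> (Si b) else \<pi> s)"
  have S: "Si a \<in> states d" "Si b \<in> states d" using assms by (auto simp: states_def actions_def)
  have P': "\<pi>' \<in> policies d"
  proof -
    have P: "\<And>s. s \<in> states d \<Longrightarrow> (\<forall>a \<in> actions d. 0 \<le> \<pi> s a) \<and> (\<Sum>a\<in>actions d. \<pi> s a) = 1"
      using assms(1) by (simp add: policies_def)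
    have "(\<forall>c \<in> actions d. 0 \<le> \<pi>' s c) \<and> (\<Sum>c\<in>actions d. \<pi>' s c) = 1" if s: "s \<in> states d" for s
    proof -
      have "s = Si b \<or> (s \<noteq> Si b \<and> s = Si a) \<or> (s \<noteq> Si b \<and> s \<noteq> Si a)" by blast
      then show ?thesis
      proof (elim disjE conjE)
        assume "s = Si b" then show ?thesis using P[OF S(1)] by (simp add: \<pi>'_def)
      next
        assume "s \<noteq> Si b" "s = Si a" then show ?thesis using P[OF S(2)] by (simp add: \<pi>'_def)
      next
        assume "s \<noteq> Si b" "s \<noteq> Si a" then show ?thesis using P[OF s] by (simp add: \<pi>'_def)
      qed
    qed
    then show ?thesis unfolding policies_def by blast
  qed
  have v: "\<pi>' (Si b) = \<pi> (Si a)" by (simp add: \<pi>'_def)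
  have "Q_pi d \<gamma> (Ttheta \<theta>) \<pi> S0 a = Q_pi d \<gamma> (Ttheta \<theta>) \<pi>' S0 b"
    using QS0[where \<gamma>=\<gamma> and \<theta>=\<theta>, OF assms(1) assms(2)] QS0[where \<gamma>=\<gamma> and \<theta>=\<theta>, OF P' assms(3), unfolded v] by simp
  then show ?thesis using P' by blast
qed

lemma QstarS0:
  assumes "a \<in> actions d" "b \<in> actions d"
  shows "Q_star d \<gamma> (Ttheta \<theta>) S0 a = Q_star d \<gamma> (Ttheta \<theta>) S0 b"
proof -
  have sub: "(\<lambda>\<pi>. Q_pi d \<gamma> (Ttheta \<theta>) \<pi> S0 x) ` policies d \<subseteq> (\<lambda>\<pi>. Q_pi d \<gamma> (Ttheta \<theta>) \<pi> S0 y) ` policies d"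
    if xy: "x \<in> actions d" "y \<in> actions d" for x y
  proof
    fix z assume "z \<in> (\<lambda>\<pi>. Q_pi d \<gamma> (Ttheta \<theta>) \<pi> S0 x) ` policies d"
    then obtain \<pi> where p: "\<pi> \<in> policies d" and z: "z = Q_pi d \<gamma> (Ttheta \<theta>) \<pi> S0 x" by blast
    obtain \<pi>' where "\<pi>' \<in> policies d" "Q_pi d \<gamma> (Ttheta \<theta>) \<pi> S0 x = Q_pi d \<gamma> (Ttheta \<theta>) \<pi>' S0 y"
      using swap_ex[where \<gamma>=\<gamma> and \<theta>=\<theta>, OF p xy] by blast
    then show "z \<in> (\<lambda>\<pi>. Q_pi d \<gamma> (Ttheta \<theta>) \<pi> S0 y) ` policies d" using z by blast
  qed
  have "(\<lambda>\<pi>. Q_pi d \<gamma> (Ttheta \<theta>) \<pi> S0 a) ` policies d = (\<lambda>\<pi>. Q_pi d \<gamma> (Ttheta \<theta>) \<pi> S0 b) ` policies d"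
    using sub[OF assms] sub[OF assms(2,1)] by (rule subset_antisym)
  then show ?thesis unfolding Q_star_def by simp
qed

lemma greedy_unif:
  assumes "\<And>a b. a \<in> actions d \<Longrightarrow> b \<in> actions d \<Longrightarrow> Q_star d \<gamma> T s a = Q_star d \<gamma> T s b"
    and "c \<in> actions d"
  shows "greedy d \<gamma> T s c = 1 / real d"
proof -
  have "\<forall>b\<in>actions d. Q_star d \<gamma> T s b \<le> Q_star d \<gamma> T s a" if "a \<in> actions d" for a
    using assms(1) that by (metis order_refl)
  then have gs: "greedy_set d \<gamma> T s = actions d" unfolding greedy_set_def by blast
  have "card (actions d) = d" by (simp add: actions_def)
  then show ?thesis unfolding greedy_def gs using assms(2) by simp
qed


lemma greedy_Si: "greedy d \<gamma> (Ttheta \<theta>) (Si i) c = greedy d \<gamma> (Ttheta \<theta>) (Si 1) c"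
proof -
  have "Q_pi d \<gamma> (Ttheta \<theta>) \<pi> (Si i) a = Q_pi d \<gamma> (Ttheta \<theta>) \<pi> (Si 1) a" for \<pi> a
  proof -
    have "(\<lambda>s'. Ttheta \<theta> (Si i) a s') = (\<lambda>s'. Ttheta \<theta> (Si 1) a s')" by (simp add: Ttheta_def)
    then show ?thesis by (simp add: Q_pi_def rew_def)
  qed
  then have "Q_star d \<gamma> (Ttheta \<theta>) (Si i) = Q_star d \<gamma> (Ttheta \<theta>) (Si 1)"
    by (simp add: Q_star_def fun_eq_iff)
  then show ?thesis by (simp add: greedy_def greedy_set_def)
qed

lemma QstarSG: "Q_star d \<gamma> (Ttheta \<theta>) SG a = Q_star d \<gamma> (Ttheta \<theta>) SG b"
proof -
  have "Q_pi d \<gamma> (Ttheta \<theta>) \<pi> SG a = Q_pi d \<gamma> (Ttheta \<theta>) \<pi> SG b" for \<pi>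
  proof -
    have "(\<lambda>s'. Ttheta \<theta> SG a s') = (\<lambda>s'. Ttheta \<theta> SG b s')" by (simp add: Ttheta_def Tstar_def)
    then show ?thesis by (simp add: Q_pi_def rew_def)
  qed
  then show ?thesis by (simp add: Q_star_def)
qed

theorem theorem2:
  fixes d :: nat and \<gamma> :: real and \<theta> :: "nat \<Rightarrow> real"
  assumes "d \<ge> 1" and "0 \<le> \<gamma>" and "\<gamma> < 1"
    and "\<forall>j \<in> {1..d}. -1 \<le> \<theta> j \<and> \<theta> j \<le> 1"
  shows "(SUP \<pi>\<in>policies d. eta d \<gamma> Tstar \<pi>) - eta d \<gamma> Tstar (greedy d \<gamma> (Ttheta \<theta>))
           \<ge> (real d - 1) * \<gamma>^2 / (real d * (1 - \<gamma>))"
proof -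
  define K where "K = \<gamma>^2 / (1 - \<gamma>)"
  have K0: "0 \<le> K" using assms by (simp add: K_def)
  have one: "1 \<in> actions d" using assms(1) by (simp add: actions_def)
  have etaP: "eta d \<gamma> Tstar \<pi> = (\<Sum>c\<in>actions d. \<pi> S0 c * \<pi> (Si c) c) * K" if "\<pi> \<in> policies d" for \<pi>
    using eta_formula[where d=d and \<pi>=\<pi>, OF pol_SG[OF that] assms(2,3)] by (simp add: K_def)
  have bdd: "bdd_above ((\<lambda>\<pi>. eta d \<gamma> Tstar \<pi>) ` policies d)"
  proof (rule bdd_aboveI2)
    fix \<pi> assume p: "\<pi> \<in> policies d"
    show "eta d \<gamma> Tstar \<pi> \<le> K" using etaP[OF p] pol_le1[OF p one] K0
      using mult_right_mono[of "\<Sum>c\<in>actions d. \<pi> S0 c * \<pi> (Si c) c" 1 K] by simp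
  qed
  define ps where "ps = (\<lambda>s a. case s of Si i \<Rightarrow> (if a = i then 1 else 0) | _ \<Rightarrow> (if a = (1::nat) then 1 else (0::real)))"
  have ps: "ps \<in> policies d"
    unfolding policies_def
  proof (intro CollectI ballI conjI)
    fix s a assume "s \<in> states d" "a \<in> actions d"
    then show "0 \<le> ps s a" by (cases s) (auto simp: ps_def)
  next
    fix s assume s: "s \<in> states d"
    show "(\<Sum>a\<in>actions d. ps s a) = 1"
    proof (cases s)
      case (Si i)
      then have "i \<in> actions d" using s by (auto simp: states_def actions_def)
      then show ?thesis by (simp add: Si ps_def actions_def)
    qed (use assms(1) in \<open>simp_all add: ps_def actions_def\<close>)
  qed
  have "(\<Sum>c\<in>actions d. ps S0 c * ps (Si c) c) = 1" using assms(1) by (simp add: ps_def actions_def)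
  then have "eta d \<gamma> Tstar ps = K" using etaP[OF ps] by simp
  then have SUPge: "K \<le> (SUP \<pi>\<in>policies d. eta d \<gamma> Tstar \<pi>)"
    using cSUP_upper[OF ps bdd] by simp
  define g where "g = greedy d \<gamma> (Ttheta \<theta>)"
  have gSG: "(\<Sum>c\<in>actions d. g SG c) = 1"
  proof -
    have "(\<Sum>c\<in>actions d. g SG c) = (\<Sum>c\<in>actions d. 1 / real d)"
      by (rule sum.cong) (auto simp: g_def intro: greedy_unif QstarSG)
    then show ?thesis using assms(1) by (simp add: actions_def)
  qed
  define G where "G = greedy_set d \<gamma> (Ttheta \<theta>) (Si 1)"
  have Gsub: "G \<subseteq> actions d" by (auto simp: G_def greedy_set_def)
  have "(\<Sum>c\<in>actions d. g S0 c * g (Si c) c) = (\<Sum>c\<in>actions d. 1 / real d * (if c \<in> G then 1 / real (card G) else 0))"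
  proof (rule sum.cong)
    fix c assume c: "c \<in> actions d"
    have "g S0 c = 1 / real d" unfolding g_def by (rule greedy_unif[OF QstarS0 c])
    moreover have "g (Si c) c = (if c \<in> G then 1 / real (card G) else 0)"
      unfolding g_def G_def by (subst greedy_Si) (simp add: greedy_def)
    ultimately show "g S0 c * g (Si c) c = 1 / real d * (if c \<in> G then 1 / real (card G) else 0)" by simp
  qed simp
  also have "\<dots> = 1 / real d * (\<Sum>c\<in>actions d. (if c \<in> G then 1 / real (card G) else 0))"
    by (simp add: sum_distrib_left)
  also have "(\<Sum>c\<in>actions d. (if c \<in> G then 1 / real (card G) else 0)) = (\<Sum>c\<in>actions d \<inter> G. 1 / real (card G))"
    by (rule sum.inter_restrict[symmetric]) (simp add: actions_def)
  also have "\<dots> = real (card G) * (1 / real (card G))"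
    using Gsub by (simp add: Int_absorb1)
  also have "\<dots> \<le> 1" by (cases "card G = 0") simp_all
  finally have pg: "(\<Sum>c\<in>actions d. g S0 c * g (Si c) c) \<le> 1 / real d"
    using assms(1) by (simp add: divide_right_mono)
  have etag: "eta d \<gamma> Tstar g \<le> 1 / real d * K"
  proof -
    have "eta d \<gamma> Tstar g = (\<Sum>c\<in>actions d. g S0 c * g (Si c) c) * K"
      using eta_formula[where d=d and \<pi>=g, OF gSG assms(2,3)] by (simp add: K_def)
    then show ?thesis using mult_right_mono[OF pg K0] by simp
  qed
  have "(real d - 1) * \<gamma>^2 / (real d * (1 - \<gamma>)) = K - 1 / real d * K"
  proof -
    have h1: "1 - \<gamma> \<noteq> 0" "real d \<noteq> 0" using assms by auto
    have "K - 1 / real d * K = ((real d - 1) / real d) * K" using h1 by (simp add: field_simps)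
    also have "\<dots> = (real d - 1) * \<gamma>^2 / (real d * (1 - \<gamma>))"
      unfolding K_def by (rule times_divide_times_eq)
    finally show ?thesis by simp
  qed
  then show ?thesis using SUPge etag unfolding g_def by linarith
qed

end
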